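(* Let $G$ be a finite bipartite graph with maximum degree $\Delta(G)$. Suppose that some set $E_0$ of edges of the Cartesian product $G \square K_2$ is precolored using colors from a set of at most $\Delta(G)+1$ colors, such that the distance between any two edges of $E_0$ is at least three. Then this precoloring is extendable, i.e. there is a proper edge coloring of $G \square K_2$ with $\chi'(G \square K_2)$ colors in which every edge of $E_0$ receives its prescribed color.
   Context: The Cartesian product $G \square H$ has vertex set $V(G)\times V(H)$, with $(u_1,u_2)$ adjacent to $(v_1,v_2)$ iff either $u_1=v_1$ and $u_2v_2 \in E(H)$, or $u_2=v_2$ and $u_1v_1\in E(G)$. The distance between vertices is the length of a shortest path between them, and the distance between edges $xy$ and $zw$ is $\min\{d(x,z),d(x,w),d(y,z),d(y,w)\}$. $\chi'$ denotes the chromatic index. *)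

theory Defs
  imports Main "HOL-Library.Extended_Nat"
begin

definition simple_graph :: "'v set \<Rightarrow> 'v set set \<Rightarrow> bool" where
  "simple_graph V E \<longleftrightarrow> finite V \<and> (\<forall>e\<in>E. e \<subseteq> V \<and> card e = 2)"

definition bipartite :: "'v set \<Rightarrow> 'v set set \<Rightarrow> bool" where
  "bipartite V E \<longleftrightarrow> (\<exists>A \<subseteq> V. \<forall>e\<in>E. card (e \<inter> A) = 1)"

definition degree :: "'v set set \<Rightarrow> 'v \<Rightarrow> nat" where
  "degree E v = card {e\<in>E. v \<in> e}"

definition max_degree :: "'v set \<Rightarrow> 'v set set \<Rightarrow> nat" where
  "max_degree V E = (if V = {} then 0 else Max (degree E ` V))"

definition cart_prod_V :: "'a set \<Rightarrow> 'b set \<Rightarrow> ('a \<times> 'b) set" where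
  "cart_prod_V V1 V2 = V1 \<times> V2"

definition cart_prod_E ::
  "'a set \<Rightarrow> 'a set set \<Rightarrow> 'b set \<Rightarrow> 'b set set \<Rightarrow> ('a \<times> 'b) set set" where
  "cart_prod_E V1 E1 V2 E2 =
     {{(u1, u2), (v1, v2)} | u1 u2 v1 v2.
        u1 \<in> V1 \<and> v1 \<in> V1 \<and> u2 \<in> V2 \<and> v2 \<in> V2 \<and>
        ((u1 = v1 \<and> {u2, v2} \<in> E2) \<or> (u2 = v2 \<and> {u1, v1} \<in> E1))}"

definition K2_V :: "bool set" where "K2_V = {False, True}"
definition K2_E :: "bool set set" where "K2_E = {{False, True}}"

definition has_walk :: "'v set set \<Rightarrow> 'v \<Rightarrow> 'v \<Rightarrow> nat \<Rightarrow> bool" where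
  "has_walk E u v n \<longleftrightarrow> (\<exists>xs. length xs = Suc n \<and> xs ! 0 = u \<and> xs ! n = v \<and>
      (\<forall>i<n. {xs ! i, xs ! Suc i} \<in> E))"

definition vdist :: "'v set set \<Rightarrow> 'v \<Rightarrow> 'v \<Rightarrow> enat" where
  "vdist E u v = (if \<exists>n. has_walk E u v n then enat (LEAST n. has_walk E u v n) else \<infinity>)"

definition edist :: "'v set set \<Rightarrow> 'v set \<Rightarrow> 'v set \<Rightarrow> enat" where
  "edist E e f = Min {vdist E x y | x y. x \<in> e \<and> y \<in> f}"

definition proper_edge_coloring :: "'v set set \<Rightarrow> ('v set \<Rightarrow> 'c) \<Rightarrow> bool" where
  "proper_edge_coloring E c \<longleftrightarrow>
     (\<forall>e\<in>E. \<forall>f\<in>E. e \<noteq> f \<and> e \<inter> f \<noteq> {} \<longrightarrow> c e \<noteq> c f)"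

definition chromatic_index :: "'v set set \<Rightarrow> nat" where
  "chromatic_index E = (LEAST k. \<exists>c :: 'v set \<Rightarrow> nat.
      proper_edge_coloring E c \<and> c ` E \<subseteq> {..<k})"

end

theory Submission
  imports Defs
begin


definition aproper :: "'e set \<Rightarrow> ('e \<Rightarrow> 'a) \<Rightarrow> ('e \<Rightarrow> 'b) \<Rightarrow> ('e \<Rightarrow> 'c) \<Rightarrow> bool" where
  "aproper B xe ye f \<longleftrightarrow> (\<forall>g\<in>B. \<forall>h\<in>B. g \<noteq> h \<and> (xe g = xe h \<or> ye g = ye h) \<longrightarrow> f g \<noteq> f h)"

lemma aproper_mono: "aproper B xe ye f \<Longrightarrow> B' \<subseteq> B \<Longrightarrow> aproper B' xe ye f"
  unfolding aproper_def by blast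

inductive_set kchain :: "'e set \<Rightarrow> ('e \<Rightarrow> 'a) \<Rightarrow> ('e \<Rightarrow> 'b) \<Rightarrow> ('e \<Rightarrow> nat) \<Rightarrow> nat \<Rightarrow> nat \<Rightarrow> 'b \<Rightarrow> ('a + 'b) set"
  for B xe ye f a b v where
  kstart: "Inr v \<in> kchain B xe ye f a b v"
| kstepY: "Inr (ye g) \<in> kchain B xe ye f a b v \<Longrightarrow> g \<in> B \<Longrightarrow> f g = a \<Longrightarrow> Inl (xe g) \<in> kchain B xe ye f a b v"
| kstepX: "Inl (xe g) \<in> kchain B xe ye f a b v \<Longrightarrow> g \<in> B \<Longrightarrow> f g = b \<Longrightarrow> Inr (ye g) \<in> kchain B xe ye f a b v"

lemma kchain_Inl:
  assumes "Inl x \<in> kchain B xe ye f a b v"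
  shows "\<exists>g\<in>B. xe g = x \<and> f g = a \<and> Inr (ye g) \<in> kchain B xe ye f a b v"
  using assms by (cases rule: kchain.cases) auto

lemma kchain_Inr:
  assumes "Inr y \<in> kchain B xe ye f a b v"
  shows "y = v \<or> (\<exists>g\<in>B. ye g = y \<and> f g = b \<and> Inl (xe g) \<in> kchain B xe ye f a b v)"
  using assms by (cases rule: kchain.cases) auto

lemma kchain_closeX:
  assumes "aproper B xe ye (f::_ \<Rightarrow> nat)" "Inl (xe g) \<in> kchain B xe ye f a b v" "g \<in> B" "f g = a \<or> f g = b"
  shows "Inr (ye g) \<in> kchain B xe ye f a b v"
proof (cases "f g = b")
  case True then show ?thesis using assms by (auto intro: kstepX)
next
  case False
  then have fa: "f g = a" using assms by auto
  obtain g' where g': "g' \<in> B" "xe g' = xe g" "f g' = a" "Inr (ye g') \<in> kchain B xe ye f a b v"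
    using kchain_Inl[OF assms(2)] by blast
  have "g' = g" using assms(1) g' fa \<open>g \<in> B\<close> unfolding aproper_def by metis
  then show ?thesis using g' by simp
qed

lemma kchain_closeY:
  assumes "aproper B xe ye (f::_ \<Rightarrow> nat)" "Inr (ye g) \<in> kchain B xe ye f a b v" "g \<in> B" "f g = a \<or> f g = b"
    "\<forall>h\<in>B. ye h = v \<longrightarrow> f h \<noteq> b"
  shows "Inl (xe g) \<in> kchain B xe ye f a b v"
proof (cases "f g = a")
  case True then show ?thesis using assms by (auto intro: kstepY)
next
  case False
  then have fb: "f g = b" using assms by auto
  have "ye g \<noteq> v" using assms(5) fb \<open>g \<in> B\<close> by auto
  then obtain g' where g': "g' \<in> B" "ye g' = ye g" "f g' = b" "Inl (xe g') \<in> kchain B xe ye f a b v"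
    using kchain_Inr[OF assms(2)] by blast
  have "g' = g" using assms(1) g' fb \<open>g \<in> B\<close> unfolding aproper_def by metis
  then show ?thesis using g' by simp
qed

definition sw :: "nat \<Rightarrow> nat \<Rightarrow> nat \<Rightarrow> nat" where
  "sw a b c = (if c = a then b else if c = b then a else c)"

lemma sw_inj: "sw a b c = sw a b d \<Longrightarrow> c = d"
  unfolding sw_def by (auto split: if_splits)

lemma kempe:
  assumes pr: "aproper B xe ye (f::_ \<Rightarrow> nat)" and lt: "\<forall>g\<in>B. f g < k" and "a < k" "b < k"
    and vb: "\<forall>g\<in>B. ye g = v \<longrightarrow> f g \<noteq> b"
    and ua: "\<forall>g\<in>B. xe g = u \<longrightarrow> f g \<noteq> a"
  shows "\<exists>f'. aproper B xe ye f' \<and> (\<forall>g\<in>B. f' g < k) \<and> (\<forall>g\<in>B. xe g = u \<longrightarrow> f' g \<noteq> a)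
      \<and> (\<forall>g\<in>B. ye g = v \<longrightarrow> f' g \<noteq> a)"
proof -
  define K where "K = kchain B xe ye f a b v"
  define f' where "f' g = (if Inr (ye g) \<in> K then sw a b (f g) else f g)" for g
  have eqv: "Inr (ye g) \<in> K \<longleftrightarrow> Inl (xe g) \<in> K" if "g \<in> B" "f g = a \<or> f g = b" for g
    using kchain_closeX[OF pr _ that] kchain_closeY[OF pr _ that vb] unfolding K_def by blast
  have nab: "sw a b c = c" if "c \<noteq> a" "c \<noteq> b" for c using that by (simp add: sw_def)
  have p1: "aproper B xe ye f'"
    unfolding aproper_def
  proof (intro ballI impI)
    fix g h assume g: "g \<in> B" and h: "h \<in> B" and gh: "g \<noteq> h \<and> (xe g = xe h \<or> ye g = ye h)"
    have fne: "f g \<noteq> f h" using pr g h gh unfolding aproper_def by blast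
    show "f' g \<noteq> f' h"
    proof (cases "ye g = ye h")
      case True
      then show ?thesis using fne sw_inj unfolding f'_def by auto
    next
      case False
      then have x: "xe g = xe h" using gh by auto
      show ?thesis
      proof (cases "(f g = a \<or> f g = b)")
        case ga: True
        show ?thesis
        proof (cases "(f h = a \<or> f h = b)")
          case True
          have "Inr (ye g) \<in> K \<longleftrightarrow> Inr (ye h) \<in> K" using eqv[OF g ga] eqv[OF h True] x by simp
          then show ?thesis using fne sw_inj unfolding f'_def by auto
        next
          case False
          then have "f' h = f h" unfolding f'_def using nab by auto
          moreover have "f' g = a \<or> f' g = b" using ga unfolding f'_def sw_def by auto
          ultimately show ?thesis using False by auto
        qed
      next
        case gn: False
        then have fg: "f' g = f g" unfolding f'_def using nab by auto
        show ?thesis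
        proof (cases "(f h = a \<or> f h = b)")
          case True
          have "f' h = a \<or> f' h = b" using True unfolding f'_def sw_def by auto
          then show ?thesis using fg gn by auto
        next
          case False
          then have "f' h = f h" unfolding f'_def using nab by auto
          then show ?thesis using fg fne by auto
        qed
      qed
    qed
  qed
  have p2: "\<forall>g\<in>B. f' g < k" using lt \<open>a < k\<close> \<open>b < k\<close> unfolding f'_def sw_def by auto
  have p3: "\<forall>g\<in>B. xe g = u \<longrightarrow> f' g \<noteq> a"
  proof (intro ballI impI)
    fix g assume g: "g \<in> B" and xu: "xe g = u"
    show "f' g \<noteq> a"
    proof (cases "Inr (ye g) \<in> K")
      case True
      show ?thesis
      proof
        assume "f' g = a"
        then have "f g = b" using True unfolding f'_def sw_def by (auto split: if_splits)
        then have "Inl (xe g) \<in> K" using eqv[OF g] True by auto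
        then obtain g' where "g' \<in> B" "xe g' = u" "f g' = a" using kchain_Inl xu unfolding K_def by metis
        then show False using ua by auto
      qed
    next
      case False
      then show ?thesis using ua g xu unfolding f'_def by auto
    qed
  qed
  have p4: "\<forall>g\<in>B. ye g = v \<longrightarrow> f' g \<noteq> a"
  proof (intro ballI impI)
    fix g assume g: "g \<in> B" and yv: "ye g = v"
    have "Inr (ye g) \<in> K" using yv kstart unfolding K_def by simp
    then have "f' g = sw a b (f g)" unfolding f'_def by simp
    moreover have "f g \<noteq> b" using vb g yv by auto
    ultimately show "f' g \<noteq> a" unfolding sw_def by auto
  qed
  show ?thesis using p1 p2 p3 p4 by blast
qed

lemma missing_color:
  assumes "finite X" "card X < k"
  shows "\<exists>a<k. a \<notin> X"
proof (rule ccontr)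
  assume "\<not> ?thesis"
  then have "{..<k} \<subseteq> X" by auto
  then have "card {..<k} \<le> card X" using assms(1) card_mono by blast
  then show False using assms by simp
qed

lemma koenig:
  assumes "finite B" "\<forall>x. card {g\<in>B. xe g = x} \<le> k" "\<forall>y. card {g\<in>B. ye g = y} \<le> k"
  shows "\<exists>f. (\<forall>g\<in>B. f g < (k::nat)) \<and> aproper B xe ye f"
  using assms
proof (induction B rule: finite_induct)
  case empty
  then show ?case by (auto simp: aproper_def)
next
  case (insert e B)
  have dx: "\<forall>x. card {g\<in>B. xe g = x} \<le> k"
  proof
    fix x
    have "card {g\<in>B. xe g = x} \<le> card {g\<in>insert e B. xe g = x}"
      by (rule card_mono) (use insert in auto)
    then show "card {g\<in>B. xe g = x} \<le> k" using insert(4) by (meson order_trans)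
  qed
  have dy: "\<forall>y. card {g\<in>B. ye g = y} \<le> k"
  proof
    fix y
    have "card {g\<in>B. ye g = y} \<le> card {g\<in>insert e B. ye g = y}"
      by (rule card_mono) (use insert in auto)
    then show "card {g\<in>B. ye g = y} \<le> k" using insert(5) by (meson order_trans)
  qed
  obtain f where flt: "\<forall>g\<in>B. f g < k" and fpr: "aproper B xe ye f"
    using insert(3)[OF dx dy] by blast
  define u where "u = xe e"
  define v where "v = ye e"
  have cu: "card {g\<in>B. xe g = u} < k"
  proof -
    have "{g\<in>insert e B. xe g = u} = insert e {g\<in>B. xe g = u}" unfolding u_def by auto
    moreover have "card (insert e {g\<in>B. xe g = u}) = Suc (card {g\<in>B. xe g = u})"
      using insert(1,2) by simp
    ultimately show ?thesis using insert(4) by (metis Suc_le_lessD)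
  qed
  have cv: "card {g\<in>B. ye g = v} < k"
  proof -
    have "{g\<in>insert e B. ye g = v} = insert e {g\<in>B. ye g = v}" unfolding v_def by auto
    moreover have "card (insert e {g\<in>B. ye g = v}) = Suc (card {g\<in>B. ye g = v})"
      using insert(1,2) by simp
    ultimately show ?thesis using insert(5) by (metis Suc_le_lessD)
  qed
  have "card (f ` {g\<in>B. xe g = u}) < k" using cu card_image_le[of "{g\<in>B. xe g = u}" f] insert(1) by simp
  then obtain a where a: "a < k" "a \<notin> f ` {g\<in>B. xe g = u}"
    using missing_color[of "f ` {g\<in>B. xe g = u}" k] insert(1) by auto
  have "card (f ` {g\<in>B. ye g = v}) < k" using cv card_image_le[of "{g\<in>B. ye g = v}" f] insert(1) by simp
  then obtain b where b: "b < k" "b \<notin> f ` {g\<in>B. ye g = v}"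
    using missing_color[of "f ` {g\<in>B. ye g = v}" k] insert(1) by auto
  have ext: "\<exists>f. (\<forall>g\<in>insert e B. f g < k) \<and> aproper (insert e B) xe ye f"
    if "aproper B xe ye f1" "\<forall>g\<in>B. f1 g < k" "c < k"
       "\<forall>g\<in>B. xe g = u \<longrightarrow> f1 g \<noteq> c" "\<forall>g\<in>B. ye g = v \<longrightarrow> f1 g \<noteq> c" for f1 c
  proof -
    have "aproper (insert e B) xe ye (f1(e := c))"
      using that insert(2) unfolding aproper_def u_def v_def by (auto; metis)
    moreover have "\<forall>g\<in>insert e B. (f1(e := c)) g < k" using that by auto
    ultimately show ?thesis by blast
  qed
  show ?case
  proof (cases "\<forall>g\<in>B. ye g = v \<longrightarrow> f g \<noteq> a")
    case True
    then show ?thesis using ext[OF fpr flt a(1)] a(2) by auto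
  next
    case False
    show ?thesis
    proof (cases "\<forall>g\<in>B. xe g = u \<longrightarrow> f g \<noteq> b")
      case True
      then show ?thesis using ext[OF fpr flt b(1)] b(2) by auto
    next
      case False
      obtain f' where "aproper B xe ye f'" "\<forall>g\<in>B. f' g < k" "\<forall>g\<in>B. xe g = u \<longrightarrow> f' g \<noteq> a"
        "\<forall>g\<in>B. ye g = v \<longrightarrow> f' g \<noteq> a"
        using kempe[OF fpr flt a(1) b(1), of v u] a(2) b(2) by auto
      then show ?thesis using ext a(1) by blast
    qed
  qed
qed



definition topd :: "'e set \<Rightarrow> ('e \<Rightarrow> 'a) \<Rightarrow> ('e \<Rightarrow> nat) \<Rightarrow> 'e \<Rightarrow> bool" where
  "topd D xe f h \<longleftrightarrow> h \<in> D \<and> (\<forall>h'\<in>D. xe h' = xe h \<longrightarrow> f h' \<le> f h)"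

lemma stable_aux:
  fixes xe :: "'e \<Rightarrow> 'a" and ye :: "'e \<Rightarrow> 'b" and f :: "'e \<Rightarrow> nat"
  assumes fin: "finite D0" and pr: "aproper D0 xe ye f"
  shows "\<forall>D. card D = n \<longrightarrow> D \<subseteq> D0 \<longrightarrow>
     (\<forall>g\<in>D0-D. \<exists>h\<in>D. topd D xe f h \<and> ye g = ye h \<and> f h < f g) \<longrightarrow>
     (\<exists>K\<subseteq>D0. (\<forall>g\<in>K. \<forall>h\<in>K. g \<noteq> h \<longrightarrow> xe g \<noteq> xe h \<and> ye g \<noteq> ye h) \<and>
        (\<forall>g\<in>D0-K. \<exists>h\<in>K. (xe g = xe h \<and> f g < f h) \<or> (ye g = ye h \<and> f h < f g)))"
proof (induction n rule: less_induct)
  case (less n)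
  show ?case
  proof (intro allI impI)
    fix D assume cD: "card D = n" and DD: "D \<subseteq> D0"
      and inv: "\<forall>g\<in>D0-D. \<exists>h\<in>D. topd D xe f h \<and> ye g = ye h \<and> f h < f g"
    have finD: "finite D" using fin DD finite_subset by blast
    show "\<exists>K\<subseteq>D0. (\<forall>g\<in>K. \<forall>h\<in>K. g \<noteq> h \<longrightarrow> xe g \<noteq> xe h \<and> ye g \<noteq> ye h) \<and>
        (\<forall>g\<in>D0-K. \<exists>h\<in>K. (xe g = xe h \<and> f g < f h) \<or> (ye g = ye h \<and> f h < f g))"
    proof (cases "\<exists>h1 h2. topd D xe f h1 \<and> topd D xe f h2 \<and> h1 \<noteq> h2 \<and> ye h1 = ye h2 \<and> f h1 < f h2")
      case True
      then obtain h1 h2 where h: "topd D xe f h1" "topd D xe f h2" "h1 \<noteq> h2" "ye h1 = ye h2" "f h1 < f h2"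
        by blast
      define D' where "D' = D - {h2}"
      have h2D: "h2 \<in> D" using h(2) unfolding topd_def by auto
      have cD': "card D' < n" unfolding D'_def using card_Diff1_less[OF finD h2D] cD by simp
      have top1: "topd D' xe f h1" using h(1) h(3) unfolding topd_def D'_def by auto
      have inv': "\<forall>g\<in>D0-D'. \<exists>h\<in>D'. topd D' xe f h \<and> ye g = ye h \<and> f h < f g"
      proof
        fix g assume g: "g \<in> D0 - D'"
        show "\<exists>h\<in>D'. topd D' xe f h \<and> ye g = ye h \<and> f h < f g"
        proof (cases "g = h2")
          case True
          then show ?thesis using top1 h(4,5) unfolding topd_def by auto
        next
          case False
          then have "g \<in> D0 - D" using g unfolding D'_def by auto
          then obtain h where hh: "h \<in> D" "topd D xe f h" "ye g = ye h" "f h < f g" using inv by blast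
          show ?thesis
          proof (cases "h = h2")
            case True
            have h1D': "h1 \<in> D'" using top1 unfolding topd_def by simp
            have "ye g = ye h1" using hh(3) h(4) True by simp
            moreover have "f h1 < f g" using hh(4) h(5) True by simp
            ultimately show ?thesis using h1D' top1 by blast
          next
            case False
            then have "topd D' xe f h" using hh unfolding topd_def D'_def by auto
            then show ?thesis using hh unfolding topd_def by auto
          qed
        qed
      qed
      have D'D0: "D' \<subseteq> D0" using DD unfolding D'_def by auto
      show ?thesis by (rule less.IH[OF cD', rule_format, OF refl D'D0]) (use inv' in blast)
    next
      case False
      define K where "K = {h\<in>D. topd D xe f h}"
      have m: "\<forall>g\<in>K. \<forall>h\<in>K. g \<noteq> h \<longrightarrow> xe g \<noteq> xe h \<and> ye g \<noteq> ye h"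
      proof (intro ballI impI)
        fix g h assume g: "g \<in> K" and h: "h \<in> K" and gh: "g \<noteq> h"
        have tg: "topd D xe f g" and th: "topd D xe f h" using g h unfolding K_def by auto
        have gD: "g \<in> D" and hD: "h \<in> D" using tg th unfolding topd_def by auto
        have gD0: "g \<in> D0" and hD0: "h \<in> D0" using gD hD DD by auto
        have pr': "\<forall>g\<in>D0. \<forall>h\<in>D0. g \<noteq> h \<and> (xe g = xe h \<or> ye g = ye h) \<longrightarrow> f g \<noteq> f h"
          using pr unfolding aproper_def .
        have "xe g \<noteq> xe h"
        proof
          assume x: "xe g = xe h"
          have "f h \<le> f g" using tg hD x unfolding topd_def by auto
          moreover have "f g \<le> f h" using th gD x unfolding topd_def by auto
          moreover have "f g \<noteq> f h" using pr' gD0 hD0 gh x by blast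
          ultimately show False by simp
        qed
        moreover have "ye g \<noteq> ye h"
        proof
          assume y: "ye g = ye h"
          have "f g \<noteq> f h" using pr' gD0 hD0 gh y by blast
          then have "f g < f h \<or> f h < f g" by auto
          then show False
          proof
            assume "f g < f h"
            then show False using False tg th gh y by blast
          next
            assume "f h < f g"
            then show False using False tg th gh y by (metis)
          qed
        qed
        ultimately show "xe g \<noteq> xe h \<and> ye g \<noteq> ye h" by simp
      qed
      have d: "\<forall>g\<in>D0-K. \<exists>h\<in>K. (xe g = xe h \<and> f g < f h) \<or> (ye g = ye h \<and> f h < f g)"
      proof
        fix g assume g: "g \<in> D0 - K"
        show "\<exists>h\<in>K. (xe g = xe h \<and> f g < f h) \<or> (ye g = ye h \<and> f h < f g)"
        proof (cases "g \<in> D")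
          case gnD: False
          then have "g \<in> D0 - D" using g by auto
          then obtain h where hh: "h \<in> D" "topd D xe f h" "ye g = ye h" "f h < f g" using inv by blast
          then have "h \<in> K" unfolding K_def by auto
          then show ?thesis using hh by blast
        next
          case gD: True
          then have ntop: "\<not> topd D xe f g" using g unfolding K_def by auto
          then have "\<not> (\<forall>h'\<in>D. xe h' = xe g \<longrightarrow> f h' \<le> f g)" using gD unfolding topd_def by simp
          then obtain h' where h': "h' \<in> D" "xe h' = xe g" "f g < f h'" by auto
          define Dx where "Dx = {h\<in>D. xe h = xe g}"
          have finx: "finite Dx" using finD unfolding Dx_def by auto
          have nex: "Dx \<noteq> {}" using h' unfolding Dx_def by auto
          have "Max (f ` Dx) \<in> f ` Dx" using finx nex by simp
          then obtain h where h: "h \<in> Dx" "f h = Max (f ` Dx)" by auto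
          have mx: "\<forall>h''\<in>Dx. f h'' \<le> f h" using h finx by simp
          have hD: "h \<in> D" and hx: "xe h = xe g" using h unfolding Dx_def by auto
          have "topd D xe f h" unfolding topd_def using hD hx mx unfolding Dx_def by auto
          then have hK: "h \<in> K" unfolding K_def using hD by auto
          have "f h' \<le> f h" using mx h' unfolding Dx_def by auto
          then have "f g < f h" using h' by simp
          then show ?thesis using hK hx by (intro bexI[of _ h]) auto
        qed
      qed
      have "K \<subseteq> D0" using DD unfolding K_def by auto
      then show ?thesis using m d by blast
    qed
  qed
qed

lemma stable_kernel:
  fixes xe :: "'e \<Rightarrow> 'a" and ye :: "'e \<Rightarrow> 'b" and f :: "'e \<Rightarrow> nat"
  assumes "finite D" "aproper D xe ye f"
  shows "\<exists>K\<subseteq>D. (\<forall>g\<in>K. \<forall>h\<in>K. g \<noteq> h \<longrightarrow> xe g \<noteq> xe h \<and> ye g \<noteq> ye h) \<and>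
        (\<forall>g\<in>D-K. \<exists>h\<in>K. (xe g = xe h \<and> f g < f h) \<or> (ye g = ye h \<and> f h < f g))"
  by (rule stable_aux[OF assms, rule_format, OF refl order_refl]) simp

definition outn :: "'e set \<Rightarrow> ('e \<Rightarrow> 'a) \<Rightarrow> ('e \<Rightarrow> 'b) \<Rightarrow> ('e \<Rightarrow> nat) \<Rightarrow> 'e \<Rightarrow> 'e set" where
  "outn B xe ye f g = {h\<in>B. (xe g = xe h \<and> f g < f h) \<or> (ye g = ye h \<and> f h < f g)}"

lemma list_col_aux:
  fixes xe :: "'e \<Rightarrow> 'a" and ye :: "'e \<Rightarrow> 'b" and f :: "'e \<Rightarrow> nat"
  shows "\<forall>B (L :: 'e \<Rightarrow> 'c set). card B = n \<longrightarrow> finite B \<longrightarrow> aproper B xe ye f \<longrightarrow>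
    (\<forall>g\<in>B. finite (L g) \<and> card (outn B xe ye f g) < card (L g)) \<longrightarrow>
    (\<exists>\<delta>. (\<forall>g\<in>B. \<delta> g \<in> L g) \<and> aproper B xe ye \<delta>)"
proof (induction n rule: less_induct)
  case (less n)
  show ?case
  proof (intro allI impI)
    fix B and L :: "'e \<Rightarrow> 'c set"
    assume cB: "card B = n" and finB: "finite B" and pr: "aproper B xe ye f"
      and cond: "\<forall>g\<in>B. finite (L g) \<and> card (outn B xe ye f g) < card (L g)"
    show "\<exists>\<delta>. (\<forall>g\<in>B. \<delta> g \<in> L g) \<and> aproper B xe ye \<delta>"
    proof (cases "B = {}")
      case True then show ?thesis by (auto simp: aproper_def)
    next
      case False
      then obtain g0 where g0: "g0 \<in> B" by auto
      then have "L g0 \<noteq> {}" using cond by fastforce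
      then obtain c where c: "c \<in> L g0" by auto
      define D where "D = {g\<in>B. c \<in> L g}"
      have finD: "finite D" using finB unfolding D_def by auto
      have "D \<subseteq> B" unfolding D_def by auto
      then have prD: "aproper D xe ye f" using aproper_mono[OF pr] by blast
      obtain K where K: "K \<subseteq> D" "\<forall>g\<in>K. \<forall>h\<in>K. g \<noteq> h \<longrightarrow> xe g \<noteq> xe h \<and> ye g \<noteq> ye h"
        "\<forall>g\<in>D-K. \<exists>h\<in>K. (xe g = xe h \<and> f g < f h) \<or> (ye g = ye h \<and> f h < f g)"
        using stable_kernel[OF finD prD] by blast
      have g0D: "g0 \<in> D" using g0 c unfolding D_def by auto
      have Kne: "K \<noteq> {}" using K(3) g0D by auto
      define B' where "B' = B - K"
      define L' where "L' g = L g - {c}" for g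
      have KB: "K \<subseteq> B" using K(1) unfolding D_def by auto
      have "B - K \<subset> B" using KB Kne by blast
      then have cB': "card B' < n" unfolding B'_def using cB psubset_card_mono[OF finB] by simp
      have finB': "finite B'" using finB unfolding B'_def by auto
      have "B' \<subseteq> B" unfolding B'_def by auto
      then have prB': "aproper B' xe ye f" using aproper_mono[OF pr] by blast
      have cond': "\<forall>g\<in>B'. finite (L' g) \<and> card (outn B' xe ye f g) < card (L' g)"
      proof
        fix g assume g: "g \<in> B'"
        have gB: "g \<in> B" using g unfolding B'_def by auto
        have finL: "finite (L' g)" using cond gB unfolding L'_def by auto
        have sub: "outn B' xe ye f g \<subseteq> outn B xe ye f g" unfolding outn_def B'_def by auto
        have finO: "finite (outn B xe ye f g)" using finB unfolding outn_def by auto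
        show "finite (L' g) \<and> card (outn B' xe ye f g) < card (L' g)"
        proof (cases "c \<in> L g")
          case True
          then have "g \<in> D - K" using g unfolding D_def B'_def by auto
          then obtain h where h: "h \<in> K" "(xe g = xe h \<and> f g < f h) \<or> (ye g = ye h \<and> f h < f g)"
            using K(3) by blast
          have hO: "h \<in> outn B xe ye f g" using h KB unfolding outn_def by auto
          moreover have "h \<notin> outn B' xe ye f g" using h unfolding outn_def B'_def by auto
          ultimately have sub2: "outn B' xe ye f g \<subseteq> outn B xe ye f g - {h}" using sub by auto
          have c1: "card (outn B xe ye f g - {h}) = card (outn B xe ye f g) - 1"
            using card_Diff_singleton[OF hO] .
          have "finite (outn B xe ye f g - {h})" using finO by blast
          then have "card (outn B' xe ye f g) \<le> card (outn B xe ye f g - {h})"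
            using card_mono sub2 by blast
          then have "card (outn B' xe ye f g) \<le> card (outn B xe ye f g) - 1" using c1 by simp
          moreover have "card (L' g) = card (L g) - 1" unfolding L'_def using True cond gB by simp
          moreover have "card (outn B xe ye f g) < card (L g)" using cond gB by auto
          moreover have "card (outn B xe ye f g) \<ge> 1"
          proof -
            have "outn B xe ye f g \<noteq> {}" using hO by blast
            then have "0 < card (outn B xe ye f g)" using finO card_gt_0_iff by blast
            then show ?thesis by simp
          qed
          ultimately show ?thesis using finL by linarith
        next
          case False
          then have "L' g = L g" unfolding L'_def by auto
          moreover have "card (outn B' xe ye f g) \<le> card (outn B xe ye f g)"
            using sub finO card_mono by blast
          ultimately show ?thesis using cond gB by fastforce
        qed
      qed
      have IH2: "card B' = card B' \<longrightarrow> finite B' \<longrightarrow> aproper B' xe ye f \<longrightarrow>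
          (\<forall>g\<in>B'. finite (L' g) \<and> card (outn B' xe ye f g) < card (L' g)) \<longrightarrow>
          (\<exists>\<delta>. (\<forall>g\<in>B'. \<delta> g \<in> L' g) \<and> aproper B' xe ye \<delta>)"
        using less.IH[OF cB', THEN spec[of _ B'], THEN spec[of _ L']] .
      have "\<exists>\<delta>. (\<forall>g\<in>B'. \<delta> g \<in> L' g) \<and> aproper B' xe ye \<delta>"
        using IH2 finB' prB' cond' by blast
      then obtain \<delta> where d: "\<forall>g\<in>B'. \<delta> g \<in> L' g" "aproper B' xe ye \<delta>" by blast
      define \<delta>' where "\<delta>' g = (if g \<in> K then c else \<delta> g)" for g
      have "\<forall>g\<in>B. \<delta>' g \<in> L g"
      proof
        fix g assume "g \<in> B"
        then show "\<delta>' g \<in> L g" using d(1) K(1) unfolding \<delta>'_def B'_def L'_def D_def by auto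
      qed
      moreover have "aproper B xe ye \<delta>'"
        unfolding aproper_def
      proof (intro ballI impI)
        fix g h assume g: "g \<in> B" and h: "h \<in> B" and gh: "g \<noteq> h \<and> (xe g = xe h \<or> ye g = ye h)"
        show "\<delta>' g \<noteq> \<delta>' h"
        proof (cases "g \<in> K")
          case gK: True
          show ?thesis
          proof (cases "h \<in> K")
            case True then show ?thesis using K(2) gK gh by blast
          next
            case False
            then have "h \<in> B'" using h unfolding B'_def by auto
            then have "\<delta> h \<noteq> c" using d(1) unfolding L'_def by auto
            then show ?thesis using gK False unfolding \<delta>'_def by auto
          qed
        next
          case gK: False
          then have gB': "g \<in> B'" using g unfolding B'_def by auto
          then have dc: "\<delta> g \<noteq> c" using d(1) unfolding L'_def by auto
          show ?thesis
          proof (cases "h \<in> K")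
            case True then show ?thesis using gK dc unfolding \<delta>'_def by auto
          next
            case False
            then have "h \<in> B'" using h unfolding B'_def by auto
            then show ?thesis using d(2) gB' gh gK False unfolding aproper_def \<delta>'_def by auto
          qed
        qed
      qed
      ultimately show ?thesis by blast
    qed
  qed
qed

lemma outn_bound:
  fixes f :: "'e \<Rightarrow> nat"
  assumes finB: "finite B" and pr: "aproper B xe ye f" and lt: "\<forall>g\<in>B. f g < k" and g: "g \<in> B"
  shows "card (outn B xe ye f g) < k"
proof -
  define S1 where "S1 = {h\<in>B. xe g = xe h \<and> f g < f h}"
  define S2 where "S2 = {h\<in>B. ye g = ye h \<and> f h < f g}"
  have "outn B xe ye f g = S1 \<union> S2" unfolding outn_def S1_def S2_def by auto
  then have c: "card (outn B xe ye f g) \<le> card S1 + card S2" by (simp add: card_Un_le)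
  have inj1: "inj_on f S1" unfolding inj_on_def S1_def using pr unfolding aproper_def by force
  have inj2: "inj_on f S2" unfolding inj_on_def S2_def using pr unfolding aproper_def by force
  have "f ` S1 \<subseteq> {f g<..<k}" unfolding S1_def using lt by auto
  then have c1: "card S1 \<le> k - Suc (f g)"
    using card_inj_on_le[OF inj1] by (metis card_greaterThanLessThan finite_greaterThanLessThan)
  have "f ` S2 \<subseteq> {..<f g}" unfolding S2_def by auto
  then have c2: "card S2 \<le> f g"
    using card_inj_on_le[OF inj2] by (metis card_lessThan finite_lessThan)
  have "f g < k" using lt g by auto
  then show ?thesis using c c1 c2 by linarith
qed

lemma galvin:
  fixes xe :: "'e \<Rightarrow> 'a" and ye :: "'e \<Rightarrow> 'b" and L :: "'e \<Rightarrow> 'c set"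
  assumes "finite B" "\<forall>x. card {g\<in>B. xe g = x} \<le> k" "\<forall>y. card {g\<in>B. ye g = y} \<le> k"
    and "\<forall>g\<in>B. finite (L g) \<and> k \<le> card (L g)"
  shows "\<exists>\<delta>. (\<forall>g\<in>B. \<delta> g \<in> L g) \<and> aproper B xe ye \<delta>"
proof -
  obtain f where f: "\<forall>g\<in>B. f g < k" "aproper B xe ye f" using koenig[OF assms(1-3)] by blast
  have "\<forall>g\<in>B. finite (L g) \<and> card (outn B xe ye f g) < card (L g)"
    using outn_bound[OF assms(1) f(2) f(1)] assms(4) by (meson less_le_trans)
  then show ?thesis using list_col_aux[of "card B" xe ye f] assms(1) f(2) by blast
qed



lemma walk0: "has_walk E p p 0"
  unfolding has_walk_def by (rule exI[of _ "[p]"]) simp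

lemma walk1: "{p, q} \<in> E \<Longrightarrow> has_walk E p q 1"
  unfolding has_walk_def by (rule exI[of _ "[p, q]"]) simp

lemma walk2: "{p, r} \<in> E \<Longrightarrow> {r, q} \<in> E \<Longrightarrow> has_walk E p q 2"
  unfolding has_walk_def
proof (rule exI[of _ "[p, r, q]"], intro conjI allI impI)
  fix i :: nat assume "i < 2" "{p, r} \<in> E" "{r, q} \<in> E"
  then show "{[p, r, q] ! i, [p, r, q] ! Suc i} \<in> E"
    by (cases i) (auto simp: less_Suc_eq)
qed simp_all

lemma vdist_le: "has_walk E p q n \<Longrightarrow> vdist E p q \<le> enat n"
  unfolding vdist_def by (auto intro: Least_le)

lemma edist_le:
  assumes "finite e" "finite f" "x \<in> e" "y \<in> f"
  shows "edist E e f \<le> vdist E x y"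
proof -
  have eq: "{vdist E x y |x y. x \<in> e \<and> y \<in> f} = (\<lambda>(x, y). vdist E x y) ` (e \<times> f)" by auto
  have "finite ((\<lambda>(x, y). vdist E x y) ` (e \<times> f))" using assms by simp
  moreover have "vdist E x y \<in> (\<lambda>(x, y). vdist E x y) ` (e \<times> f)" using assms by force
  ultimately show ?thesis unfolding edist_def eq by (rule Min_le)
qed

lemma H_char:
  assumes "simple_graph V E"
  shows "e \<in> cart_prod_E V E K2_V K2_E \<longleftrightarrow>
    (\<exists>u v i. {u, v} \<in> E \<and> e = {(u, i), (v, i)}) \<or> (\<exists>v\<in>V. e = {(v, False), (v, True)})"
proof
  assume "e \<in> cart_prod_E V E K2_V K2_E"
  then obtain u1 u2 v1 v2 where e: "e = {(u1, u2), (v1, v2)}" "u1 \<in> V" "v1 \<in> V"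
    "(u1 = v1 \<and> {u2, v2} \<in> K2_E) \<or> (u2 = v2 \<and> {u1, v1} \<in> E)"
    unfolding cart_prod_E_def by blast
  show "(\<exists>u v i. {u, v} \<in> E \<and> e = {(u, i), (v, i)}) \<or> (\<exists>v\<in>V. e = {(v, False), (v, True)})"
  proof (cases "u1 = v1 \<and> {u2, v2} \<in> K2_E")
    case True
    then have "{u2, v2} = {False, True}" unfolding K2_E_def by simp
    then have "e = {(u1, False), (u1, True)}" using e(1) True by (auto simp: doubleton_eq_iff)
    then show ?thesis using e(2) by blast
  next
    case False
    then have "u2 = v2 \<and> {u1, v1} \<in> E" using e(4) by blast
    then show ?thesis using e(1) by blast
  qed
next
  assume "(\<exists>u v i. {u, v} \<in> E \<and> e = {(u, i), (v, i)}) \<or> (\<exists>v\<in>V. e = {(v, False), (v, True)})"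
  then show "e \<in> cart_prod_E V E K2_V K2_E"
  proof
    assume "\<exists>u v i. {u, v} \<in> E \<and> e = {(u, i), (v, i)}"
    then obtain u v i where uv: "{u, v} \<in> E" "e = {(u, i), (v, i)}" by blast
    have "u \<in> V" "v \<in> V" using assms uv(1) unfolding simple_graph_def by auto
    then show ?thesis unfolding cart_prod_E_def K2_V_def using uv by blast
  next
    assume "\<exists>v\<in>V. e = {(v, False), (v, True)}"
    then obtain v where "v \<in> V" "e = {(v, False), (v, True)}" by blast
    then show ?thesis unfolding cart_prod_E_def K2_V_def K2_E_def by blast
  qed
qed

lemma bip_edge:
  assumes "card g = 2" "card (g \<inter> A) = 1"
  shows "\<exists>x y. g = {x, y} \<and> x \<in> A \<and> y \<notin> A"
proof -
  obtain a b where ab: "g = {a, b}" "a \<noteq> b" using assms(1) card_2_iff by metis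
  show ?thesis
  proof (cases "a \<in> A")
    case True
    show ?thesis
    proof (cases "b \<in> A")
      case True
      then have "g \<inter> A = {a, b}" using ab \<open>a \<in> A\<close> by auto
      then show ?thesis using assms(2) ab(2) by simp
    next
      case False
      then show ?thesis using ab \<open>a \<in> A\<close> by blast
    qed
  next
    case False
    show ?thesis
    proof (cases "b \<in> A")
      case True
      then show ?thesis using ab False by (metis insert_commute)
    next
      case nb: False
      then have "g \<inter> A = {}" using ab False by auto
      then show ?thesis using assms(2) by simp
    qed
  qed
qed



theorem theorem3:
  fixes V :: "'v set" and E :: "'v set set"
    and E0 :: "('v \<times> bool) set set" and \<phi>0 :: "('v \<times> bool) set \<Rightarrow> nat"
    and C :: "nat set"
  assumes "simple_graph V E"
    and "bipartite V E"
    and "E0 \<subseteq> cart_prod_E V E K2_V K2_E"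
    and "\<forall>e\<in>E0. \<phi>0 e \<in> C"
    and "finite C" and "card C \<le> max_degree V E + 1"
    and "\<forall>e\<in>E0. \<forall>f\<in>E0. e \<noteq> f \<longrightarrow> edist (cart_prod_E V E K2_V K2_E) e f \<ge> 3"
  shows "\<exists>c :: ('v \<times> bool) set \<Rightarrow> nat.
           proper_edge_coloring (cart_prod_E V E K2_V K2_E) c \<and>
           card (c ` cart_prod_E V E K2_V K2_E) = chromatic_index (cart_prod_E V E K2_V K2_E) \<and>
           (\<forall>e\<in>E0. c e = \<phi>0 e)"
proof -
  define H where "H = cart_prod_E V E K2_V K2_E"
  have finV: "finite V" and Esub: "\<forall>e\<in>E. e \<subseteq> V \<and> card e = 2"
    using assms(1) unfolding simple_graph_def by auto
  have Hc: "e \<in> H \<longleftrightarrow> (\<exists>u v i. {u, v} \<in> E \<and> e = {(u, i), (v, i)}) \<or> (\<exists>v\<in>V. e = {(v, False), (v, True)})"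
    for e unfolding H_def using H_char[OF assms(1)] .
  have E0H: "E0 \<subseteq> H" using assms(3) unfolding H_def .
  have finH: "finite H"
  proof -
    have "H \<subseteq> Pow (V \<times> UNIV)" using Hc Esub by fastforce
    moreover have "finite (Pow (V \<times> (UNIV :: bool set)))" using finV by simp
    ultimately show ?thesis using finite_subset by blast
  qed
  show ?thesis
  proof (cases "V = {}")
    case True
    have "E = {}"
    proof (rule ccontr)
      assume "E \<noteq> {}"
      then obtain e where "e \<in> E" by auto
      then have "e \<subseteq> V" "card e = 2" using Esub by auto
      then show False using True by simp
    qed
    then have H0: "H = {}" using Hc True by auto
    have E00: "E0 = {}" using E0H H0 by auto
    have ci: "chromatic_index ({} :: ('v \<times> bool) set set) = 0"
      unfolding chromatic_index_def proper_edge_coloring_def by (rule Least_eq_0) simp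
    have H0': "cart_prod_E V E K2_V K2_E = {}" using H0 unfolding H_def .
    show ?thesis
      by (rule exI[of _ "\<lambda>_. 0"]) (simp add: H0' E00 ci proper_edge_coloring_def)
  next
    case Vne: False
    define k where "k = max_degree V E"
    have kdef: "k = Max (degree E ` V)" unfolding k_def max_degree_def using Vne by simp
    have degk: "degree E v \<le> k" for v
    proof (cases "v \<in> V")
      case True
      then show ?thesis unfolding kdef using finV by simp
    next
      case False
      then have "{e\<in>E. v \<in> e} = {}" using Esub by auto
      then show ?thesis by (simp only: degree_def card.empty)
    qed
    obtain v0 where v0: "v0 \<in> V" "degree E v0 = k"
    proof -
      have "Max (degree E ` V) \<in> degree E ` V" using finV Vne by simp
      then show ?thesis using that unfolding kdef by auto
    qed
    have finE: "finite E"
    proof -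
      have "E \<subseteq> Pow V" using Esub by auto
      then show ?thesis using finV finite_subset by blast
    qed

    have Hfin: "finite e" if "e \<in> H" for e
    proof -
      have "(\<exists>u v j. {u, v} \<in> E \<and> e = {(u, j), (v, j)}) \<or> (\<exists>w\<in>V. e = {(w, False), (w, True)})"
        using Hc[of e] that(1) by simp
      then show ?thesis by auto
    qed
    have HV: "x \<in> V" if "e \<in> H" "(x, i) \<in> e" for e x i
    proof -
      have "(\<exists>u v j. {u, v} \<in> E \<and> e = {(u, j), (v, j)}) \<or> (\<exists>w\<in>V. e = {(w, False), (w, True)})"
        using Hc[of e] that(1) by simp
      then consider (h) u v j where "{u, v} \<in> E" "e = {(u, j), (v, j)}"
        | (v) w where "w \<in> V" "e = {(w, False), (w, True)}" by blast
      then show ?thesis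
      proof cases
        case h
        then have "u \<in> V" "v \<in> V" using Esub by auto
        then show ?thesis using h that(2) by auto
      next
        case v
        then show ?thesis using that(2) by auto
      qed
    qed
    have far: "3 \<le> n" if "e \<in> E0" "f \<in> E0" "e \<noteq> f" "p \<in> e" "q \<in> f" "has_walk H p q n" for e f p q n
    proof -
      have eH: "e \<in> H" "f \<in> H" using E0H that(1,2) by auto
      have "edist H e f \<le> vdist H p q" using edist_le[OF Hfin[OF eH(1)] Hfin[OF eH(2)] that(4,5)] .
      also have "\<dots> \<le> enat n" using vdist_le[OF that(6)] .
      finally have a: "edist H e f \<le> enat n" .
      have b: "3 \<le> edist H e f" using assms(7) that(1-3) unfolding H_def by simp
      have "(3::enat) \<le> enat n" using order_trans[OF b a] .
      then show ?thesis by (simp add: numeral_eq_enat)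
    qed
    have key: False if "e \<in> E0" "f \<in> E0" "e \<noteq> f" "(x, i) \<in> e" "(y, j) \<in> f" "x = y \<or> {x, y} \<in> E"
      for e f x i y j
    proof -
      have xV: "x \<in> V" using HV E0H that by blast
      have vert: "{(x, i), (x, j')} \<in> H" if "i \<noteq> j'" for j'
      proof -
        have "{(x, i), (x, j')} = {(x, False), (x, True)}" using that by (cases i; cases j') auto
        then show ?thesis using Hc[of "{(x, i), (x, j')}"] xV by blast
      qed
      have hor: "{(x, i'), (y, i')} \<in> H" if "{x, y} \<in> E" for i' using Hc[of "{(x, i'), (y, i')}"] that by blast
      show False
      proof (cases "x = y")
        case True
        show False
        proof (cases "i = j")
          case True
          then have "(x, i) \<in> f" using that(5) \<open>x = y\<close> by simp
          then show False using far[OF that(1-4) _ walk0] by simp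
        next
          case False
          have "(x, j) \<in> f" using that(5) \<open>x = y\<close> by simp
          then show False using far[OF that(1-4) _ walk1[OF vert[OF False]]] by simp
        qed
      next
        case False
        then have xy: "{x, y} \<in> E" using that(6) by simp
        show False
        proof (cases "i = j")
          case True
          then have "(y, i) \<in> f" using that(5) by simp
          then show False using far[OF that(1-4) _ walk1[OF hor[OF xy]]] by simp
        next
          case False
          then show False using far[OF that(1-5) walk2[OF vert[OF False] hor[OF xy]]] by simp
        qed
      qed
    qed
    have Hne: "e \<noteq> {}" if "e \<in> H" for e
    proof -
      have "(\<exists>u v j. {u, v} \<in> E \<and> e = {(u, j), (v, j)}) \<or> (\<exists>w\<in>V. e = {(w, False), (w, True)})"
        using Hc[of e] that(1) by simp
      then show ?thesis by auto
    qed
    have uniq: "e = f" if eE: "e \<in> E0" and fE: "f \<in> E0" and ef: "fst ` e = fst ` f" for e f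
    proof (rule ccontr)
      assume ne: "e \<noteq> f"
      have "e \<noteq> {}" using Hne E0H eE by blast
      then obtain x i where xi: "(x, i) \<in> e" by auto
      then have "x \<in> fst ` f" using ef by force
      then obtain j where "(x, j) \<in> f" by auto
      then show False using key[OF eE fE ne xi] by blast
    qed

    obtain T :: "nat set" where T: "finite T" "card T = k + 1 - card C" "T \<subseteq> - C"
      using infinite_arbitrarily_large[of "- C"] assms(5) by (metis finite_compl infinite_UNIV_nat)
    define S where "S = C \<union> T"
    have finS: "finite S" unfolding S_def using T assms(5) by simp
    have CS: "C \<subseteq> S" unfolding S_def by auto
    have cardS: "card S = k + 1"
    proof -
      have CT: "C \<inter> T = {}" using T(3) by auto
      have "card S = card C + card T" unfolding S_def using card_Un_disjoint[OF assms(5) T(1) CT] .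
      then show ?thesis using T(2) assms(6) unfolding k_def by simp
    qed
    have "\<exists>A\<subseteq>V. \<forall>e\<in>E. card (e \<inter> A) = 1" using assms(2) unfolding bipartite_def .
    then obtain A where A: "A \<subseteq> V" "\<forall>e\<in>E. card (e \<inter> A) = 1" by (elim exE conjE)
    define xe where "xe g = (THE x. x \<in> g \<and> x \<in> A)" for g :: "'v set"
    define ye where "ye g = (THE y. y \<in> g \<and> y \<notin> A)" for g :: "'v set"
    have exy: "\<exists>x y. g = {x, y} \<and> x \<in> A \<and> y \<notin> A \<and> xe g = x \<and> ye g = y" if "g \<in> E" for g
    proof -
      have c2: "card g = 2" using Esub that by auto
      have c1: "card (g \<inter> A) = 1" using A(2) that by auto
      obtain x y where xy: "g = {x, y}" "x \<in> A" "y \<notin> A"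
        using bip_edge[OF c2 c1] by blast
      have "xe g = x" unfolding xe_def using xy by (intro the_equality) auto
      moreover have "ye g = y" unfolding ye_def using xy by (intro the_equality) auto
      ultimately show ?thesis using xy by blast
    qed
    have xeg: "xe g \<in> g" "ye g \<in> g" if "g \<in> E" for g
      using exy[OF that] by auto
    have adj: "xe g = xe h \<or> ye g = ye h" if gE: "g \<in> E" and hE: "h \<in> E" and gh: "g \<inter> h \<noteq> {}" for g h
    proof -
      obtain z where z: "z \<in> g" "z \<in> h" using gh by auto
      obtain x y where g: "g = {x, y}" "x \<in> A" "y \<notin> A" "xe g = x" "ye g = y" using exy[OF gE] by blast
      obtain x' y' where h: "h = {x', y'}" "x' \<in> A" "y' \<notin> A" "xe h = x'" "ye h = y'" using exy[OF hE] by blast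
      show ?thesis
      proof (cases "z \<in> A")
        case True
        then have "z = x" "z = x'" using g(1-3) h(1-3) z by auto
        then show ?thesis using g(4) h(4) by simp
      next
        case False
        then have "z = y" "z = y'" using g(1-3) h(1-3) z by auto
        then show ?thesis using g(5) h(5) by simp
      qed
    qed
    define P where "P = {g\<in>E. \<exists>e\<in>E0. fst ` e = g}"
    define Forb where "Forb g = {\<phi>0 e |e. e \<in> E0 \<and> fst ` e \<inter> g \<noteq> {}}" for g :: "'v set"
    define L where "L g = S - Forb g" for g :: "'v set"
    define B where "B = E - P"
    have forb1: "a = b" if gE: "g \<in> E" and aF: "a \<in> Forb g" and bF: "b \<in> Forb g" for g a b
    proof -
      obtain e where e: "e \<in> E0" "fst ` e \<inter> g \<noteq> {}" "a = \<phi>0 e" using aF unfolding Forb_def by blast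
      obtain f where f: "f \<in> E0" "fst ` f \<inter> g \<noteq> {}" "b = \<phi>0 f" using bF unfolding Forb_def by blast
      show ?thesis
      proof (cases "e = f")
        case True then show ?thesis using e f by simp
      next
        case False
        obtain x i where xi: "(x, i) \<in> e" "x \<in> g" using e(2) by auto
        obtain y j where yj: "(y, j) \<in> f" "y \<in> g" using f(2) by auto
        have "x = y \<or> {x, y} \<in> E"
        proof (cases "x = y")
          case False
          obtain x' y' where "g = {x', y'}" using exy[OF gE] by blast
          then have "g = {x, y}" using xi(2) yj(2) False by auto
          then show ?thesis using gE by simp
        qed simp
        then show ?thesis using key[OF e(1) f(1) False xi(1) yj(1)] by simp
      qed
    qed
    have cardL: "finite (L g) \<and> k \<le> card (L g)" if "g \<in> E" for g
    proof -
      have finL: "finite (L g)" unfolding L_def using finS by simp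
      have "L g = S - (Forb g \<inter> S)" unfolding L_def by auto
      moreover have fFS: "finite (Forb g \<inter> S)" using finS by simp
      moreover have "card (Forb g \<inter> S) \<le> Suc 0"
        using card_le_Suc0_iff_eq[OF fFS] forb1[OF that] by blast
      ultimately have "card S - Suc 0 \<le> card (L g)" using diff_card_le_card_Diff[OF fFS, of S] by simp
      then show ?thesis using finL cardS by simp
    qed
    have finB: "finite B" unfolding B_def using finE by simp
    have degx: "card {g\<in>B. xe g = x} \<le> k" for x
    proof -
      have "{g\<in>B. xe g = x} \<subseteq> {g\<in>E. x \<in> g}" unfolding B_def using xeg by blast
      then have "card {g\<in>B. xe g = x} \<le> degree E x" unfolding degree_def using finE by (simp add: card_mono)
      then show ?thesis using degk order_trans by blast
    qed
    have degy: "card {g\<in>B. ye g = y} \<le> k" for y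
    proof -
      have "{g\<in>B. ye g = y} \<subseteq> {g\<in>E. y \<in> g}" unfolding B_def using xeg by blast
      then have "card {g\<in>B. ye g = y} \<le> degree E y" unfolding degree_def using finE by (simp add: card_mono)
      then show ?thesis using degk order_trans by blast
    qed
    obtain \<delta> where \<delta>: "\<forall>g\<in>B. \<delta> g \<in> L g" "aproper B xe ye \<delta>"
      using galvin[OF finB, of xe k ye L] degx degy cardL unfolding B_def by blast

    have BE: "B \<subseteq> E" unfolding B_def by auto
    define \<delta>' where "\<delta>' g = (if g \<in> P then \<phi>0 (SOME e. e \<in> E0 \<and> fst ` e = g) else \<delta> g)" for g
    have \<delta>'P: "\<delta>' (fst ` e) = \<phi>0 e" if eE0: "e \<in> E0" and eE: "fst ` e \<in> E" for e
    proof -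
      have inP: "fst ` e \<in> P" unfolding P_def using eE0 eE by blast
      have ex: "\<exists>e'. e' \<in> E0 \<and> fst ` e' = fst ` e" using eE0 by blast
      have "(SOME e'. e' \<in> E0 \<and> fst ` e' = fst ` e) \<in> E0 \<and> fst ` (SOME e'. e' \<in> E0 \<and> fst ` e' = fst ` e) = fst ` e"
        using someI_ex[OF ex] .
      then have "(SOME e'. e' \<in> E0 \<and> fst ` e' = fst ` e) = e" using uniq eE0 by blast
      then show ?thesis unfolding \<delta>'_def using inP by simp
    qed
    have srcP: "\<exists>e\<in>E0. fst ` e = g" if "g \<in> P" for g using that unfolding P_def by blast
    have \<delta>B: "\<delta>' g = \<delta> g" "\<delta> g \<in> S" "\<delta> g \<notin> Forb g" if "g \<in> E" "g \<notin> P" for g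
    proof -
      show "\<delta>' g = \<delta> g" unfolding \<delta>'_def using that by simp
      have "g \<in> B" unfolding B_def using that by simp
      then have "\<delta> g \<in> L g" using \<delta>(1) by blast
      then show "\<delta> g \<in> S" "\<delta> g \<notin> Forb g" unfolding L_def by auto
    qed
    have \<delta>'S: "\<delta>' g \<in> S" if gE: "g \<in> E" for g
    proof (cases "g \<in> P")
      case True
      then obtain e where "e \<in> E0" "fst ` e = g" using srcP by blast
      then have "\<delta>' g = \<phi>0 e" using \<delta>'P gE by blast
      then show ?thesis using assms(4) CS \<open>e \<in> E0\<close> by auto
    next
      case False
      then show ?thesis using \<delta>B gE by simp
    qed
    have PF: "\<phi>0 e \<in> Forb h" if "e \<in> E0" "fst ` e \<inter> h \<noteq> {}" for e h
      unfolding Forb_def using that by blast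
    have \<delta>'pr: "\<delta>' g \<noteq> \<delta>' h" if gE: "g \<in> E" and hE: "h \<in> E" and gh: "g \<noteq> h" and gi: "g \<inter> h \<noteq> {}" for g h
    proof (cases "g \<in> P")
      case gP: True
      obtain e where e: "e \<in> E0" "fst ` e = g" using srcP gP by blast
      have dg: "\<delta>' g = \<phi>0 e" using \<delta>'P e gE by blast
      show ?thesis
      proof (cases "h \<in> P")
        case True
        obtain f where f: "f \<in> E0" "fst ` f = h" using srcP True by blast
        have ef: "e \<noteq> f" using e f gh by blast
        obtain z where z: "z \<in> g" "z \<in> h" using gi by blast
        obtain i where i: "(z, i) \<in> e" using z(1) e(2) by force
        obtain j where j: "(z, j) \<in> f" using z(2) f(2) by force
        show ?thesis using key[OF e(1) f(1) ef i j] by simp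
      next
        case False
        have "\<phi>0 e \<in> Forb h" using PF e gi by blast
        then show ?thesis using dg \<delta>B[OF hE False] by auto
      qed
    next
      case gP: False
      show ?thesis
      proof (cases "h \<in> P")
        case True
        obtain f where f: "f \<in> E0" "fst ` f = h" using srcP True by blast
        have dh: "\<delta>' h = \<phi>0 f" using \<delta>'P f hE by blast
        have "fst ` f \<inter> g \<noteq> {}" using f(2) gi by blast
        then have "\<phi>0 f \<in> Forb g" using PF f(1) by blast
        then show ?thesis using dh \<delta>B[OF gE gP] by auto
      next
        case False
        have gB: "g \<in> B" and hB: "h \<in> B" unfolding B_def using gE hE gP False by auto
        have "xe g = xe h \<or> ye g = ye h" using adj[OF gE hE gi] .
        then have "\<delta> g \<noteq> \<delta> h" using \<delta>(2) gB hB gh unfolding aproper_def by blast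
        then show ?thesis using \<delta>B[OF gE gP] \<delta>B[OF hE False] by simp
      qed
    qed
    define m where "m v = (if \<exists>w\<in>E0. fst ` w = {v} then \<phi>0 (SOME w. w \<in> E0 \<and> fst ` w = {v})
        else (SOME c. c \<in> S \<and> c \<notin> \<delta>' ` {g\<in>E. v \<in> g}))" for v
    have mW: "m v = \<phi>0 w" if wE0: "w \<in> E0" and wv: "fst ` w = {v}" for v w
    proof -
      have ex: "\<exists>w'. w' \<in> E0 \<and> fst ` w' = {v}" using wE0 wv by blast
      have "(SOME w'. w' \<in> E0 \<and> fst ` w' = {v}) \<in> E0 \<and> fst ` (SOME w'. w' \<in> E0 \<and> fst ` w' = {v}) = {v}"
        using someI_ex[OF ex] .
      then have "(SOME w'. w' \<in> E0 \<and> fst ` w' = {v}) = w" using uniq wE0 wv by metis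
      then show ?thesis unfolding m_def using wE0 wv by auto
    qed
    have mS: "m v \<in> S \<and> (\<forall>g\<in>E. v \<in> g \<longrightarrow> \<delta>' g \<noteq> m v)" for v
    proof (cases "\<exists>w\<in>E0. fst ` w = {v}")
      case True
      then obtain w where w: "w \<in> E0" "fst ` w = {v}" by blast
      have mv: "m v = \<phi>0 w" using mW w by blast
      have "\<delta>' g \<noteq> \<phi>0 w" if gE: "g \<in> E" and vg: "v \<in> g" for g
      proof (cases "g \<in> P")
        case True
        obtain e where e: "e \<in> E0" "fst ` e = g" using srcP True by blast
        have "card g = 2" using Esub gE by auto
        then have "e \<noteq> w" using e(2) w(2) by auto
        obtain i where i: "(v, i) \<in> e" using vg e(2) by force
        obtain j where j: "(v, j) \<in> w" using w(2) by force
        show ?thesis using key[OF e(1) w(1) \<open>e \<noteq> w\<close> i j] by simp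
      next
        case False
        have "fst ` w \<inter> g \<noteq> {}" using w(2) vg by blast
        then have "\<phi>0 w \<in> Forb g" using PF w(1) by blast
        then show ?thesis using \<delta>B[OF gE False] by auto
      qed
      then show ?thesis using mv assms(4) CS w(1) by auto
    next
      case False
      define D where "D = {g\<in>E. v \<in> g}"
      have finD: "finite D" unfolding D_def using finE by simp
      have "card (\<delta>' ` D) \<le> card D" using card_image_le[OF finD] .
      also have "\<dots> = degree E v" unfolding D_def degree_def by simp
      also have "\<dots> \<le> k" using degk .
      finally have "card (\<delta>' ` D) < card S" using cardS by simp
      then have "\<not> S \<subseteq> \<delta>' ` D" using card_mono[OF finite_imageI[OF finD]] by (meson not_le)
      then have ex: "\<exists>c. c \<in> S \<and> c \<notin> \<delta>' ` D" by blast
      have mv: "m v = (SOME c. c \<in> S \<and> c \<notin> \<delta>' ` D)" unfolding m_def D_def using False by simp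
      have mm: "m v \<in> S \<and> m v \<notin> \<delta>' ` D" unfolding mv using someI_ex[OF ex] .
      have "\<delta>' g \<noteq> m v" if "g \<in> E" "v \<in> g" for g
      proof
        assume "\<delta>' g = m v"
        moreover have "g \<in> D" unfolding D_def using that by simp
        ultimately have "m v \<in> \<delta>' ` D" by (metis image_eqI)
        then show False using mm by simp
      qed
      then show ?thesis using mm by blast
    qed
    define cH where "cH e = (if card (fst ` e) = 2 then \<delta>' (fst ` e) else m (fst (SOME p. p \<in> e)))"
      for e :: "('v \<times> bool) set"
    have cHh: "cH {(u, i), (v, i)} = \<delta>' {u, v}" if "{u, v} \<in> E" for u v i
    proof -
      have "fst ` {(u, i), (v, i)} = {u, v}" by simp
      moreover have "card {u, v} = 2" using Esub that by blast
      ultimately show ?thesis unfolding cH_def by simp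
    qed
    have cHv: "cH {(w, False), (w, True)} = m w" for w
    proof -
      have "fst ` {(w, False), (w, True)} = {w}" by simp
      moreover have "fst (SOME p. p \<in> {(w, False), (w, True)}) = w"
      proof -
        have "(SOME p. p \<in> {(w, False), (w, True)}) \<in> {(w, False), (w, True)}" by (rule someI[of _ "(w, False)"]) simp
        then show ?thesis by auto
      qed
      ultimately show ?thesis unfolding cH_def by simp
    qed
    have Hcases: "(\<exists>u v i. {u, v} \<in> E \<and> e = {(u, i), (v, i)}) \<or> (\<exists>w\<in>V. e = {(w, False), (w, True)})"
      if "e \<in> H" for e using Hc[of e] that by simp
    have cHS: "cH e \<in> S" if "e \<in> H" for e
      using Hcases[OF that] cHh cHv \<delta>'S mS by auto
    have cHpr: "proper_edge_coloring H cH"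
      unfolding proper_edge_coloring_def
    proof (intro ballI impI)
      fix e f assume eH: "e \<in> H" and fH: "f \<in> H" and ef: "e \<noteq> f \<and> e \<inter> f \<noteq> {}"
      from Hcases[OF eH] show "cH e \<noteq> cH f"
      proof
        assume "\<exists>u v i. {u, v} \<in> E \<and> e = {(u, i), (v, i)}"
        then obtain u v i where e: "{u, v} \<in> E" "e = {(u, i), (v, i)}" by blast
        from Hcases[OF fH] show ?thesis
        proof
          assume "\<exists>u v i. {u, v} \<in> E \<and> f = {(u, i), (v, i)}"
          then obtain u' v' i' where f: "{u', v'} \<in> E" "f = {(u', i'), (v', i')}" by blast
          have ii: "i = i'" using ef e(2) f(2) by auto
          have ne: "{u, v} \<noteq> {u', v'}" using ef e(2) f(2) ii by auto
          have int: "{u, v} \<inter> {u', v'} \<noteq> {}" using ef e(2) f(2) by auto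
          show ?thesis using \<delta>'pr[OF e(1) f(1) ne int] cHh e f by simp
        next
          assume "\<exists>w\<in>V. f = {(w, False), (w, True)}"
          then obtain w where f: "f = {(w, False), (w, True)}" by blast
          have "w \<in> {u, v}" using ef e(2) f by auto
          then show ?thesis using mS[of w] e cHh cHv f by auto
        qed
      next
        assume "\<exists>w\<in>V. e = {(w, False), (w, True)}"
        then obtain w where e: "e = {(w, False), (w, True)}" by blast
        from Hcases[OF fH] show ?thesis
        proof
          assume "\<exists>u v i. {u, v} \<in> E \<and> f = {(u, i), (v, i)}"
          then obtain u v i where f: "{u, v} \<in> E" "f = {(u, i), (v, i)}" by blast
          have "w \<in> {u, v}" using ef e f(2) by auto
          then show ?thesis using mS[of w] e cHh cHv f by auto
        next
          assume "\<exists>w\<in>V. f = {(w, False), (w, True)}"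
          then obtain w' where f: "f = {(w', False), (w', True)}" by blast
          have "w = w'" using ef e f by auto
          then show ?thesis using ef e f by simp
        qed
      qed
    qed
    have cHE0: "cH e = \<phi>0 e" if eE0: "e \<in> E0" for e
    proof -
      have eH: "e \<in> H" using E0H eE0 by blast
      from Hcases[OF eH] show ?thesis
      proof
        assume "\<exists>u v i. {u, v} \<in> E \<and> e = {(u, i), (v, i)}"
        then obtain u v i where e: "{u, v} \<in> E" "e = {(u, i), (v, i)}" by blast
        have "fst ` e = {u, v}" using e(2) by simp
        then show ?thesis using \<delta>'P[OF eE0] e cHh by simp
      next
        assume "\<exists>w\<in>V. e = {(w, False), (w, True)}"
        then obtain w where e: "e = {(w, False), (w, True)}" by blast
        have "fst ` e = {w}" using e by simp
        then show ?thesis using mW[OF eE0] e cHv by simp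
      qed
    qed
    have lower: "k + 1 \<le> card (c ` H)" if cpr: "proper_edge_coloring H c" for c :: "('v \<times> bool) set \<Rightarrow> nat"
    proof -
      define emb where "emb g = (\<lambda>x. (x, False)) ` g" for g :: "'v set"
      define D where "D = {g\<in>E. v0 \<in> g}"
      define vert where "vert = {(v0, False), (v0, True)}"
      define star where "star = insert vert (emb ` D)"
      have vH: "vert \<in> H" unfolding vert_def using Hc v0(1) by blast
      have embH: "emb g \<in> H" if "g \<in> D" for g
      proof -
        have gE: "g \<in> E" using that unfolding D_def by simp
        then obtain a b where "g = {a, b}" using Esub card_2_iff by metis
        then have "emb g = {(a, False), (b, False)}" unfolding emb_def by simp
        then show ?thesis using Hc gE \<open>g = {a, b}\<close> by blast
      qed
      have starH: "star \<subseteq> H" unfolding star_def using vH embH by blast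
      have common: "(v0, False) \<in> e" if "e \<in> star" for e
        using that unfolding star_def vert_def emb_def D_def by auto
      have inj: "inj_on c star"
      proof (rule inj_onI)
        fix e f assume "e \<in> star" "f \<in> star" "c e = c f"
        then show "e = f" using cpr starH common unfolding proper_edge_coloring_def by blast
      qed
      have injemb: "inj_on emb D"
      proof (rule inj_onI)
        fix g h assume "emb g = emb h"
        then have "fst ` emb g = fst ` emb h" by simp
        moreover have "fst ` emb g = g" "fst ` emb h = h" unfolding emb_def by (simp_all add: image_image)
        ultimately show "g = h" by simp
      qed
      have finD: "finite D" unfolding D_def using finE by simp
      have vnot: "vert \<notin> emb ` D" unfolding vert_def emb_def by auto
      have "card star = Suc (card (emb ` D))" unfolding star_def using vnot finD by simp
      also have "card (emb ` D) = card D" using card_image[OF injemb] .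
      also have "card D = k" using v0(2) unfolding D_def degree_def by simp
      finally have cs: "card star = k + 1" by simp
      have "card (c ` star) = k + 1" using card_image[OF inj] cs by simp
      moreover have "card (c ` star) \<le> card (c ` H)" using starH finH by (intro card_mono) auto
      ultimately show ?thesis by simp
    qed
    have cHimg: "card (cH ` H) = k + 1"
    proof -
      have "cH ` H \<subseteq> S" using cHS by blast
      then have "card (cH ` H) \<le> k + 1" using card_mono[OF finS] cardS by metis
      then show ?thesis using lower[OF cHpr] by simp
    qed
    obtain \<beta> where \<beta>: "bij_betw \<beta> S {..<k + 1}"
      using finite_same_card_bij[OF finS, of "{..<k + 1}"] cardS by auto
    have ci: "chromatic_index H = k + 1"
      unfolding chromatic_index_def
    proof (rule Least_equality)
      have "proper_edge_coloring H (\<beta> \<circ> cH)"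
        unfolding proper_edge_coloring_def
      proof (intro ballI impI)
        fix e f assume eH: "e \<in> H" and fH: "f \<in> H" and ef: "e \<noteq> f \<and> e \<inter> f \<noteq> {}"
        have "cH e \<noteq> cH f" using cHpr eH fH ef unfolding proper_edge_coloring_def by blast
        moreover have "inj_on \<beta> S" using \<beta> bij_betw_def by blast
        ultimately show "(\<beta> \<circ> cH) e \<noteq> (\<beta> \<circ> cH) f" using cHS[OF eH] cHS[OF fH] inj_on_def by (metis comp_apply)
      qed
      moreover have "(\<beta> \<circ> cH) ` H \<subseteq> {..<k + 1}" using \<beta> cHS unfolding bij_betw_def by auto
      ultimately show "\<exists>c :: ('v \<times> bool) set \<Rightarrow> nat. proper_edge_coloring H c \<and> c ` H \<subseteq> {..<k + 1}" by blast
    next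
      fix j assume "\<exists>c :: ('v \<times> bool) set \<Rightarrow> nat. proper_edge_coloring H c \<and> c ` H \<subseteq> {..<j}"
      then obtain c :: "('v \<times> bool) set \<Rightarrow> nat" where c: "proper_edge_coloring H c" "c ` H \<subseteq> {..<j}" by blast
      have "card (c ` H) \<le> card {..<j}" using c(2) by (intro card_mono) auto
      then show "k + 1 \<le> j" using lower[OF c(1)] by simp
    qed
    have "proper_edge_coloring H cH \<and> card (cH ` H) = chromatic_index H \<and> (\<forall>e\<in>E0. cH e = \<phi>0 e)"
      using cHpr cHimg ci cHE0 by simp
    then show ?thesis unfolding H_def by blast
  qed
qed

end
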